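(* Let $\mathcal{C}\subseteq 2^{[n]}$ and $\mathcal{D}\subseteq 2^{[m]}$ be codes and let $f:\mathcal{C}\to\mathcal{D}$ be a morphism. If $\mathcal{C}$ is convex, then the image code $f(\mathcal{C})\subseteq 2^{[m]}$ is convex and $\mathrm{mindim}(f(\mathcal{C}))\le \mathrm{mindim}(\mathcal{C})$. In particular, if $\mathcal{C}$ and $\mathcal{D}$ are isomorphic, then $\mathcal{C}$ is convex if and only if $\mathcal{D}$ is convex, and when both are convex they have the same minimal embedding dimension.
   Context: A code is a subset $\mathcal{C}\subseteq 2^{[n]}$ (a family of subsets of $[n]=\{1,\dots,n\}$); its elements are called codewords. For $\sigma\subseteq[n]$, the trunk of $\sigma$ in $\mathcal{C}$ is $\mathrm{Tk}_{\mathcal{C}}(\sigma)=\{c\in\mathcal{C}\mid \sigma\subseteq c\}$. A subset of $\mathcal{C}$ is a trunk in $\mathcal{C}$ if it is empty or equals $\mathrm{Tk}_{\mathcal{C}}(\sigma)$ for some $\sigma\subseteq[n]$. A function $f:\mathcal{C}\to\mathcal{D}$ between codes is a morphism if for every trunk $T$ in $\mathcal{D}$, the preimage $f^{-1}(T)$ is a trunk in $\mathcal{C}$; it is an isomorphism if it has an inverse function that is also a morphism. Given sets $U_1,\dots,U_n\subseteq X$, the code of $\mathcal{U}=\{U_1,\dots,U_n\}$ in $X$ is $\mathrm{code}(\mathcal{U},X)=\{\sigma\subseteq[n]\mid \bigcap_{i\in\sigma}U_i\setminus\bigcup_{j\notin\sigma}U_j\neq\emptyset\}$, where the empty intersection is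 $X$. A code $\mathcal{C}\subseteq 2^{[n]}$ is convex if $\mathcal{C}=\mathrm{code}(\mathcal{U},X)$ for some open convex $X\subseteq\mathbb{R}^d$ and convex open sets $U_1,\dots,U_n\subseteq X$; $\mathrm{mindim}(\mathcal{C})$ is the smallest such $d$. *)

theory Defs
  imports "HOL-Analysis.Analysis"
begin

text \<open>Codes on [n] = {1..n} are families of subsets of {1..n}, represented as
  nat set set with the side condition C \<subseteq> Pow {1..n}.\<close>

definition trunk_of :: "nat set set \<Rightarrow> nat set \<Rightarrow> nat set set" where
  "trunk_of C \<sigma> = {c \<in> C. \<sigma> \<subseteq> c}"

definition is_trunk :: "nat \<Rightarrow> nat set set \<Rightarrow> nat set set \<Rightarrow> bool" where
  "is_trunk n C T \<longleftrightarrow> T = {} \<or> (\<exists>\<sigma>. \<sigma> \<subseteq> {1..n} \<and> T = trunk_of C \<sigma>)"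

definition code_morphism ::
  "nat \<Rightarrow> nat set set \<Rightarrow> nat \<Rightarrow> nat set set \<Rightarrow> (nat set \<Rightarrow> nat set) \<Rightarrow> bool" where
  "code_morphism n C m D f \<longleftrightarrow>
     (\<forall>c\<in>C. f c \<in> D) \<and> (\<forall>T. is_trunk m D T \<longrightarrow> is_trunk n C {c \<in> C. f c \<in> T})"

definition code_isomorphic :: "nat \<Rightarrow> nat set set \<Rightarrow> nat \<Rightarrow> nat set set \<Rightarrow> bool" where
  "code_isomorphic n C m D \<longleftrightarrow>
     (\<exists>f g. code_morphism n C m D f \<and> code_morphism m D n C g \<and>
            (\<forall>c\<in>C. g (f c) = c) \<and> (\<forall>d\<in>D. f (g d) = d))"

definition code_of :: "nat \<Rightarrow> (nat \<Rightarrow> 'a set) \<Rightarrow> 'a set \<Rightarrow> nat set set" where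
  "code_of n U X = {\<sigma>. \<sigma> \<subseteq> {1..n} \<and>
      (X \<inter> (\<Inter>i\<in>\<sigma>. U i)) - (\<Union>j\<in>{1..n} - \<sigma>. U j) \<noteq> {}}"

text \<open>Euclidean space R^d, realised as the real sequences vanishing from index d on,
  with the (product = Euclidean) topology and coordinatewise convex combinations.\<close>
definition Rspace :: "nat \<Rightarrow> (nat \<Rightarrow> real) set" where
  "Rspace d = {x. \<forall>i\<ge>d. x i = 0}"

definition convex_fun_set :: "(nat \<Rightarrow> real) set \<Rightarrow> bool" where
  "convex_fun_set S \<longleftrightarrow>
     (\<forall>x\<in>S. \<forall>y\<in>S. \<forall>t::real. 0 \<le> t \<and> t \<le> 1 \<longrightarrow> (\<lambda>i. (1 - t) * x i + t * y i) \<in> S)"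

definition open_convex_in :: "nat \<Rightarrow> (nat \<Rightarrow> real) set \<Rightarrow> bool" where
  "open_convex_in d S \<longleftrightarrow> S \<subseteq> Rspace d \<and> openin (top_of_set (Rspace d)) S \<and> convex_fun_set S"

definition convex_code_in_dim :: "nat \<Rightarrow> nat set set \<Rightarrow> nat \<Rightarrow> bool" where
  "convex_code_in_dim n C d \<longleftrightarrow>
     (\<exists>X U. open_convex_in d X \<and> (\<forall>i\<in>{1..n}. open_convex_in d (U i) \<and> U i \<subseteq> X)
            \<and> C = code_of n U X)"

definition convex_code :: "nat \<Rightarrow> nat set set \<Rightarrow> bool" where
  "convex_code n C \<longleftrightarrow> (\<exists>d. convex_code_in_dim n C d)"

definition mindim :: "nat \<Rightarrow> nat set set \<Rightarrow> nat" where
  "mindim n C = (LEAST d. convex_code_in_dim n C d)"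

end

theory Submission
  imports Defs
begin

lemma oc_empty: "open_convex_in d {}"
  unfolding open_convex_in_def convex_fun_set_def by auto

lemma oc_Int: "open_convex_in d A \<Longrightarrow> open_convex_in d B \<Longrightarrow> open_convex_in d (A \<inter> B)"
  unfolding open_convex_in_def convex_fun_set_def by (auto intro: openin_Int)

lemma oc_Inter:
  assumes "finite S" "open_convex_in d X" "\<forall>i\<in>S. open_convex_in d (U i)"
  shows "open_convex_in d (X \<inter> (\<Inter>i\<in>S. U i))"
  using assms
proof (induction S rule: finite_induct)
  case empty then show ?case by simp
next
  case (insert x F)
  have "X \<inter> (\<Inter>i\<in>insert x F. U i) = U x \<inter> (X \<inter> (\<Inter>i\<in>F. U i))" by auto
  then show ?case using insert oc_Int by auto
qed

lemma key:
  assumes mor: "code_morphism n C m D f" and Dm: "D \<subseteq> Pow {1..m}"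
    and cv: "convex_code_in_dim n C d"
  shows "convex_code_in_dim m (f ` C) d"
proof -
  obtain X U where X: "open_convex_in d X"
    and U: "\<forall>i\<in>{1..n}. open_convex_in d (U i) \<and> U i \<subseteq> X" and C: "C = code_of n U X"
    using cv unfolding convex_code_in_dim_def by blast
  define P where "P j = {c\<in>C. f c \<in> trunk_of D {j}}" for j
  have fD: "\<And>c. c \<in> C \<Longrightarrow> f c \<in> D" using mor unfolding code_morphism_def by blast
  have tr: "is_trunk n C (P j)" if "j \<in> {1..m}" for j
  proof -
    have "is_trunk m D (trunk_of D {j})" unfolding is_trunk_def using that by blast
    then show ?thesis using mor unfolding code_morphism_def P_def by blast
  qed
  define \<sigma> where "\<sigma> j = (SOME s. s \<subseteq> {1..n} \<and> P j = trunk_of C s)" for j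
  have sig: "\<sigma> j \<subseteq> {1..n} \<and> P j = trunk_of C (\<sigma> j)" if "j \<in> {1..m}" "P j \<noteq> {}" for j
  proof -
    have "\<exists>s. s \<subseteq> {1..n} \<and> P j = trunk_of C s" using tr[OF that(1)] that(2) unfolding is_trunk_def by blast
    then show ?thesis unfolding \<sigma>_def by (rule someI_ex)
  qed
  define V where "V j = (if P j = {} then {} else X \<inter> (\<Inter>i\<in>\<sigma> j. U i))" for j
  define cw where "cw p = {i\<in>{1..n}. p \<in> U i}" for p
  have f1: "cw p \<in> C" if "p \<in> X" for p
    unfolding C code_of_def cw_def using that by auto
  have f2: "\<exists>p\<in>X. cw p = c" if "c \<in> C" for c
  proof -
    from that obtain p where p: "p \<in> X" "\<forall>i\<in>c. p \<in> U i" "\<forall>j\<in>{1..n} - c. p \<notin> U j" and cs: "c \<subseteq> {1..n}"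
      unfolding C code_of_def by blast
    have "cw p = c" unfolding cw_def using p cs by auto
    then show ?thesis using p by blast
  qed
  have f3: "p \<in> V j \<longleftrightarrow> j \<in> f (cw p)" if "p \<in> X" "j \<in> {1..m}" for p j
  proof (cases "P j = {}")
    case True
    have "j \<notin> f (cw p)"
    proof
      assume "j \<in> f (cw p)"
      then have "cw p \<in> P j" unfolding P_def trunk_of_def using f1[OF that(1)] fD by auto
      then show False using True by simp
    qed
    then show ?thesis unfolding V_def using True by simp
  next
    case False
    note s = sig[OF that(2) False]
    have "p \<in> V j \<longleftrightarrow> \<sigma> j \<subseteq> cw p" unfolding V_def cw_def using False s that(1) by auto
    also have "\<dots> \<longleftrightarrow> cw p \<in> P j" using s f1[OF that(1)] unfolding trunk_of_def by auto
    also have "\<dots> \<longleftrightarrow> j \<in> f (cw p)" unfolding P_def trunk_of_def using f1[OF that(1)] fD by auto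
    finally show ?thesis .
  qed
  have fsub: "f c \<subseteq> {1..m}" if "c \<in> C" for c using fD[OF that] Dm by auto
  have eq: "code_of m V X = f ` C"
  proof
    show "code_of m V X \<subseteq> f ` C"
    proof
      fix s assume "s \<in> code_of m V X"
      then obtain p where s: "s \<subseteq> {1..m}" "p \<in> X" "\<forall>j\<in>s. p \<in> V j" "\<forall>j\<in>{1..m} - s. p \<notin> V j"
        unfolding code_of_def by blast
      have "s = f (cw p)"
      proof
        show "s \<subseteq> f (cw p)" using s f3 by blast
        show "f (cw p) \<subseteq> s" using s f3 fsub[OF f1[OF s(2)]] by blast
      qed
      then show "s \<in> f ` C" using f1[OF s(2)] by blast
    qed
    show "f ` C \<subseteq> code_of m V X"
    proof
      fix s assume "s \<in> f ` C"
      then obtain c where c: "c \<in> C" "s = f c" by blast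
      obtain p where p: "p \<in> X" "cw p = c" using f2[OF c(1)] by blast
      have "p \<in> (X \<inter> (\<Inter>j\<in>s. V j)) - (\<Union>j\<in>{1..m} - s. V j)"
      proof -
        have fc: "f c \<subseteq> {1..m}" using fsub c(1) .
        have "\<forall>j\<in>s. p \<in> V j" using f3[OF p(1)] p(2) c(2) fc by blast
        moreover have "\<forall>j\<in>{1..m} - s. p \<notin> V j" using f3[OF p(1)] p(2) c(2) by blast
        ultimately show ?thesis using p(1) by blast
      qed
      then show "s \<in> code_of m V X" unfolding code_of_def using fsub c by blast
    qed
  qed
  have Vok: "open_convex_in d (V j) \<and> V j \<subseteq> X" if "j \<in> {1..m}" for j
  proof (cases "P j = {}")
    case True then show ?thesis unfolding V_def using oc_empty by simp
  next
    case False
    note s = sig[OF that False]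
    have "finite (\<sigma> j)" using s finite_subset by blast
    then have "open_convex_in d (X \<inter> (\<Inter>i\<in>\<sigma> j. U i))"
      using oc_Inter X U s by blast
    then show ?thesis unfolding V_def using False by simp
  qed
  show ?thesis unfolding convex_code_in_dim_def using X Vok eq by blast
qed

lemma key2:
  assumes "code_morphism n C m D f" "D \<subseteq> Pow {1..m}" "convex_code n C"
  shows "convex_code m (f ` C) \<and> mindim m (f ` C) \<le> mindim n C"
proof -
  have d: "convex_code_in_dim n C (mindim n C)"
    using assms(3) unfolding convex_code_def mindim_def by (meson LeastI)
  have "convex_code_in_dim m (f ` C) (mindim n C)" using key[OF assms(1,2) d] .
  then show ?thesis unfolding convex_code_def mindim_def by (meson Least_le)
qed

theorem theorem1p1:
  fixes n m :: nat and C D :: "nat set set"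
  assumes "C \<subseteq> Pow {1..n}" and "D \<subseteq> Pow {1..m}"
  shows "(\<forall>f. code_morphism n C m D f \<and> convex_code n C \<longrightarrow>
            convex_code m (f ` C) \<and> mindim m (f ` C) \<le> mindim n C)
       \<and> (code_isomorphic n C m D \<longrightarrow>
            (convex_code n C \<longleftrightarrow> convex_code m D) \<and>
            (convex_code n C \<and> convex_code m D \<longrightarrow> mindim n C = mindim m D))"
proof (rule conjI)
  show "\<forall>f. code_morphism n C m D f \<and> convex_code n C \<longrightarrow>
            convex_code m (f ` C) \<and> mindim m (f ` C) \<le> mindim n C"
    using key2 assms(2) by blast
next
  show "code_isomorphic n C m D \<longrightarrow>
            (convex_code n C \<longleftrightarrow> convex_code m D) \<and>
            (convex_code n C \<and> convex_code m D \<longrightarrow> mindim n C = mindim m D)"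
  proof (intro impI)
  assume "code_isomorphic n C m D"
  then obtain f g where f: "code_morphism n C m D f" and g: "code_morphism m D n C g"
    and gf: "\<forall>c\<in>C. g (f c) = c" and fg: "\<forall>d\<in>D. f (g d) = d"
    unfolding code_isomorphic_def by blast
  have fC: "f ` C = D"
  proof
    show "f ` C \<subseteq> D" using f unfolding code_morphism_def by blast
    show "D \<subseteq> f ` C"
    proof
      fix d assume "d \<in> D"
      then have "g d \<in> C" "f (g d) = d" using g fg unfolding code_morphism_def by auto
      then show "d \<in> f ` C" by force
    qed
  qed
  have gD: "g ` D = C"
  proof
    show "g ` D \<subseteq> C" using g unfolding code_morphism_def by blast
    show "C \<subseteq> g ` D"
    proof
      fix c assume "c \<in> C"
      then have "f c \<in> D" "g (f c) = c" using f gf unfolding code_morphism_def by auto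
      then show "c \<in> g ` D" by force
    qed
  qed
  note A = key2[OF f assms(2)] key2[OF g assms(1)]
  have "convex_code n C \<longleftrightarrow> convex_code m D" using A fC gD by auto
  have "convex_code n C \<and> convex_code m D \<longrightarrow> mindim n C = mindim m D"
  proof
    assume h: "convex_code n C \<and> convex_code m D"
    have "mindim m D \<le> mindim n C" using A(1) h fC by simp
    moreover have "mindim n C \<le> mindim m D" using A(2) h gD by simp
    ultimately show "mindim n C = mindim m D" by simp
  qed
  then show "(convex_code n C \<longleftrightarrow> convex_code m D) \<and>
            (convex_code n C \<and> convex_code m D \<longrightarrow> mindim n C = mindim m D)"
    using \<open>convex_code n C \<longleftrightarrow> convex_code m D\<close> by blast
  qed
qed

end
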